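(* Let $D$ be a digraph, let $X \subseteq V(D)$, let $y \in V(D) \setminus X$, and let $\mathcal{P}$ and $\mathcal{Q}$ be $(X,y)$-path-systems in $D$. Then there is an $(X,y)$-path-system $\mathcal{R}$ in $D$ with $V^-(\mathcal{R}) \supseteq V^-(\mathcal{P})$ and $E^+(\mathcal{R}) \supseteq E^+(\mathcal{Q})$.
   Context: Digraphs have no loops or parallel edges. An $(X,y)$-path is a directed path whose initial vertex lies in $X$, whose terminal vertex is $y$, and which is internally disjoint from $X$. An $(X,y)$-path-system is a set of $(X,y)$-paths which are pairwise disjoint except for $y$. For a set $\mathcal{P}$ of paths, $V^-(\mathcal{P})$ is the set of initial vertices and $E^+(\mathcal{P})$ the set of terminal edges of the paths in $\mathcal{P}$. *)

theory Defs
  imports Main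
begin

definition digraph :: "'a set \<Rightarrow> ('a \<times> 'a) set \<Rightarrow> bool" where
  "digraph V E \<longleftrightarrow> finite V \<and> E \<subseteq> V \<times> V \<and> (\<forall>v. (v, v) \<notin> E)"

definition dpath :: "'a set \<Rightarrow> ('a \<times> 'a) set \<Rightarrow> 'a list \<Rightarrow> bool" where
  "dpath V E p \<longleftrightarrow> p \<noteq> [] \<and> distinct p \<and> set p \<subseteq> V \<and>
     (\<forall>i. Suc i < length p \<longrightarrow> (p ! i, p ! Suc i) \<in> E)"

definition XY_path :: "'a set \<Rightarrow> ('a \<times> 'a) set \<Rightarrow> 'a set \<Rightarrow> 'a \<Rightarrow> 'a list \<Rightarrow> bool" where
  "XY_path V E X y p \<longleftrightarrow> dpath V E p \<and> hd p \<in> X \<and> last p = y \<and>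
     (\<forall>v \<in> set (tl p). v \<notin> X)"

definition XY_path_system :: "'a set \<Rightarrow> ('a \<times> 'a) set \<Rightarrow> 'a set \<Rightarrow> 'a \<Rightarrow> 'a list set \<Rightarrow> bool" where
  "XY_path_system V E X y \<P> \<longleftrightarrow> (\<forall>p \<in> \<P>. XY_path V E X y p) \<and>
     (\<forall>p \<in> \<P>. \<forall>q \<in> \<P>. p \<noteq> q \<longrightarrow> set p \<inter> set q \<subseteq> {y})"

definition init_vertices :: "'a list set \<Rightarrow> 'a set" where
  "init_vertices \<P> = hd ` \<P>"

definition terminal_edges :: "'a list set \<Rightarrow> ('a \<times> 'a) set" where
  "terminal_edges \<P> = (\<lambda>p. (last (butlast p), last p)) ` \<P>"

end

theory Submission
  imports Defs
begin

definition idx :: "'a list \<Rightarrow> 'a \<Rightarrow> nat" where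
  "idx p a = length (takeWhile (\<lambda>u. u \<noteq> a) p)"

lemma idx_lt: "a \<in> set p \<Longrightarrow> idx p a < length p"
  unfolding idx_def by (induction p) auto

lemma nth_idx: "a \<in> set p \<Longrightarrow> p ! idx p a = a"
  unfolding idx_def by (induction p) auto

lemma idx_nth: "distinct p \<Longrightarrow> i < length p \<Longrightarrow> idx p (p ! i) = i"
proof (induction p arbitrary: i)
  case Nil then show ?case by simp
next
  case (Cons b p)
  then show ?case
    by (cases i) (auto simp: idx_def)
qed

lemma idx_inj: "a \<in> set p \<Longrightarrow> b \<in> set p \<Longrightarrow> idx p a = idx p b \<Longrightarrow> a = b"
  by (metis nth_idx)

lemma set_take_idx:
  assumes "distinct p" "b \<in> set p"
  shows "set (take (idx p b) p) = {a \<in> set p. idx p a < idx p b}"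
proof (intro set_eqI iffI)
  fix a assume "a \<in> set (take (idx p b) p)"
  then obtain j where j: "j < length (take (idx p b) p)" "take (idx p b) p ! j = a"
    by (auto simp: in_set_conv_nth)
  then have "j < idx p b" "j < length p" "p ! j = a" by auto
  then show "a \<in> {a \<in> set p. idx p a < idx p b}" using idx_nth[OF assms(1)] by auto
next
  fix a assume a: "a \<in> {a \<in> set p. idx p a < idx p b}"
  then have "take (idx p b) p ! idx p a = a" "idx p a < length (take (idx p b) p)"
    using nth_idx idx_lt by auto
  then show "a \<in> set (take (idx p b) p)" by (metis nth_mem)
qed

lemma set_drop_idx:
  assumes "distinct p" "b \<in> set p"
  shows "set (drop (idx p b) p) = {a \<in> set p. idx p b \<le> idx p a}"
proof -
  let ?k = "idx p b"
  have d: "set (take ?k p) \<inter> set (drop ?k p) = {}"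
    using assms(1) by (metis append_take_drop_id distinct_append)
  have u: "set p = set (take ?k p) \<union> set (drop ?k p)"
    by (metis append_take_drop_id set_append)
  show ?thesis
  proof (intro set_eqI iffI)
    fix a assume a: "a \<in> set (drop ?k p)"
    then have "a \<notin> set (take ?k p)" using d by blast
    then show "a \<in> {a \<in> set p. ?k \<le> idx p a}" using a set_take_idx[OF assms] u
      by (metis (no_types, lifting) UnI2 mem_Collect_eq not_le)
  next
    fix a assume a: "a \<in> {a \<in> set p. ?k \<le> idx p a}"
    then have "a \<notin> set (take ?k p)" using set_take_idx[OF assms] by simp
    then show "a \<in> set (drop ?k p)" using a u by blast
  qed
qed

lemma dpath_take: "dpath V E p \<Longrightarrow> 0 < i \<Longrightarrow> dpath V E (take i p)"
  unfolding dpath_def by (auto simp: distinct_take dest: in_set_takeD)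

lemma dpath_drop: "dpath V E p \<Longrightarrow> i < length p \<Longrightarrow> dpath V E (drop i p)"
  unfolding dpath_def by (auto simp: dest: in_set_dropD)

lemma dpath_append:
  assumes "dpath V E xs" "dpath V E ys" "(last xs, hd ys) \<in> E" "set xs \<inter> set ys = {}"
  shows "dpath V E (xs @ ys)"
  unfolding dpath_def
proof (intro conjI allI impI)
  show "xs @ ys \<noteq> []" "distinct (xs @ ys)" "set (xs @ ys) \<subseteq> V"
    using assms unfolding dpath_def by auto
  fix i assume i: "Suc i < length (xs @ ys)"
  consider "Suc i < length xs" | "Suc i = length xs" | "length xs \<le> i" by linarith
  then show "((xs @ ys) ! i, (xs @ ys) ! Suc i) \<in> E"
  proof cases
    case 1 then show ?thesis using assms(1) unfolding dpath_def by (auto simp: nth_append)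
  next
    case 2
    have "xs \<noteq> []" using 2 by auto
    moreover have "i = length xs - 1" using 2 by simp
    ultimately have "xs ! i = last xs" by (simp add: last_conv_nth)
    moreover have "ys ! 0 = hd ys" using assms(2) unfolding dpath_def by (simp add: hd_conv_nth)
    ultimately show ?thesis using 2 assms(3) by (auto simp: nth_append)
  next
    case 3
    define k where "k = i - length xs"
    have k1: "(xs @ ys) ! i = ys ! k" "(xs @ ys) ! Suc i = ys ! Suc k"
      using 3 unfolding k_def by (auto simp: nth_append Suc_diff_le)
    have "Suc k < length ys" using 3 i unfolding k_def by simp
    then show ?thesis using assms(2) k1 unfolding dpath_def by auto
  qed
qed

lemma XY_basic:
  assumes "XY_path V E X y p" "y \<notin> X"
  shows "p \<noteq> [] \<and> distinct p \<and> hd p \<in> X \<and> last p = y \<and> hd p \<noteq> y \<and> 2 \<le> length p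
     \<and> set p \<subseteq> V \<and> (\<forall>v\<in>set (tl p). v \<notin> X) \<and> y \<in> set p"
proof -
  have d: "dpath V E p" "hd p \<in> X" "last p = y" "\<forall>v\<in>set (tl p). v \<notin> X"
    using assms unfolding XY_path_def by auto
  then have ne: "p \<noteq> []" "distinct p" "set p \<subseteq> V" unfolding dpath_def by auto
  have "hd p \<noteq> y" using d assms(2) by auto
  moreover have "2 \<le> length p"
  proof (rule ccontr)
    assume "\<not> 2 \<le> length p"
    then have "length p = 1" using ne by (cases p) (auto simp: not_le)
    then obtain a where "p = [a]" by (metis One_nat_def length_0_conv length_Suc_conv)
    then have "hd p = last p" by simp
    then show False using d assms(2) by auto
  qed
  ultimately show ?thesis using d ne by auto
qed

lemma idx_append1: "w \<in> set xs \<Longrightarrow> idx (xs @ ys) w = idx xs w"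
  unfolding idx_def by (simp add: takeWhile_append1)

lemma idx_take: "w \<in> set (take i q) \<Longrightarrow> idx q w = idx (take i q) w"
  by (metis append_take_drop_id idx_append1)

lemma idx_last:
  assumes "distinct p" "p \<noteq> []"
  shows "idx p (last p) = length p - 1"
  using assms idx_nth[of p "length p - 1"] by (simp add: last_conv_nth)

lemma idx_le_last:
  assumes "distinct p" "p \<noteq> []" "a \<in> set p"
  shows "idx p a \<le> idx p (last p)"
  using idx_last[OF assms(1,2)] idx_lt[OF assms(3)] by simp

lemma idx_hd: "p \<noteq> [] \<Longrightarrow> idx p (hd p) = 0"
  unfolding idx_def by (cases p) auto

lemma set_tl_distinct: "distinct c \<Longrightarrow> c \<noteq> [] \<Longrightarrow> set (tl c) = set c - {hd c}"
  by (cases c) auto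

lemma last_filter_in: "filter Pr q \<noteq> [] \<Longrightarrow> last (filter Pr q) \<in> set q \<and> Pr (last (filter Pr q))"
  using last_in_set[of "filter Pr q"] by simp

lemma last_filter_idx:
  assumes "distinct q" "z \<in> set q" "Pr z"
  shows "idx q z \<le> idx q (last (filter Pr q))"
  using assms
proof (induction q rule: rev_induct)
  case Nil then show ?case by simp
next
  case (snoc a q)
  show ?case
  proof (cases "Pr a")
    case True
    then have "last (filter Pr (q @ [a])) = a" by simp
    moreover have "idx (q @ [a]) z < length (q @ [a])" using snoc.prems idx_lt by metis
    moreover have "idx (q @ [a]) a = length q"
      using idx_last[of "q @ [a]"] snoc.prems by simp
    ultimately show ?thesis by simp
  next
    case False
    then have za: "z \<in> set q" using snoc.prems by auto
    have ne: "filter Pr q \<noteq> []" using za snoc.prems by (metis filter_empty_conv)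
    then have "last (filter Pr q) \<in> set q" using last_filter_in by metis
    then show ?thesis using False snoc za by (simp add: idx_append1)
  qed
qed

definition VPs :: "'a list set \<Rightarrow> 'a \<Rightarrow> 'a set" where
  "VPs P y = (\<Union>p\<in>P. set p) - {y}"

definition bef :: "'a list \<Rightarrow> 'a \<Rightarrow> 'a \<Rightarrow> bool" where
  "bef p a b \<longleftrightarrow> a \<in> set p \<and> b \<in> set p \<and> idx p a < idx p b"

fun after :: "'a option \<Rightarrow> 'a list \<Rightarrow> 'a set" where
  "after None q = set q"
| "after (Some x) q = {z \<in> set q. idx q x < idx q z}"

definition finv :: "'a list set \<Rightarrow> 'a list set \<Rightarrow> 'a \<Rightarrow> ('a list \<Rightarrow> 'a option) \<Rightarrow> bool" where
  "finv P Q y f \<longleftrightarrow> (\<forall>q\<in>Q. \<forall>x. f q = Some x \<longrightarrow> x \<in> set q \<and> x \<in> VPs P y) \<and>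
     (\<forall>q\<in>Q. \<forall>z\<in>after (f q) q. z \<in> VPs P y \<longrightarrow>
        (\<exists>q'\<in>Q. \<exists>x'. f q' = Some x' \<and> (\<exists>p\<in>P. bef p x' z)))"

definition fcf :: "'a list set \<Rightarrow> 'a list set \<Rightarrow> ('a list \<Rightarrow> 'a option) \<Rightarrow> bool" where
  "fcf P Q f \<longleftrightarrow> (\<forall>q1\<in>Q. \<forall>q2\<in>Q. \<forall>x1 x2. f q1 = Some x1 \<longrightarrow> f q2 = Some x2 \<longrightarrow>
     (\<exists>p\<in>P. x1 \<in> set p \<and> x2 \<in> set p) \<longrightarrow> q1 = q2)"

context
  fixes V :: "'a set" and E :: "('a \<times> 'a) set" and X :: "'a set" and y :: 'a
    and P Q :: "'a list set"
  assumes G: "digraph V E" and XV: "X \<subseteq> V" and yV: "y \<in> V" and yX: "y \<notin> X"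
    and PS: "XY_path_system V E X y P" and QS: "XY_path_system V E X y Q"
begin

lemma Pb: "p \<in> P \<Longrightarrow> p \<noteq> [] \<and> distinct p \<and> hd p \<in> X \<and> last p = y \<and> hd p \<noteq> y \<and> 2 \<le> length p
     \<and> set p \<subseteq> V \<and> (\<forall>v\<in>set (tl p). v \<notin> X) \<and> y \<in> set p \<and> XY_path V E X y p \<and> dpath V E p"
  using PS XY_basic[OF _ yX] unfolding XY_path_system_def XY_path_def by blast

lemma Qb: "q \<in> Q \<Longrightarrow> q \<noteq> [] \<and> distinct q \<and> hd q \<in> X \<and> last q = y \<and> hd q \<noteq> y \<and> 2 \<le> length q
     \<and> set q \<subseteq> V \<and> (\<forall>v\<in>set (tl q). v \<notin> X) \<and> y \<in> set q \<and> XY_path V E X y q \<and> dpath V E q"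
  using QS XY_basic[OF _ yX] unfolding XY_path_system_def XY_path_def by blast

lemma P_uniq: "p1 \<in> P \<Longrightarrow> p2 \<in> P \<Longrightarrow> z \<in> set p1 \<Longrightarrow> z \<in> set p2 \<Longrightarrow> z \<noteq> y \<Longrightarrow> p1 = p2"
  using PS unfolding XY_path_system_def by blast

lemma Q_uniq: "q1 \<in> Q \<Longrightarrow> q2 \<in> Q \<Longrightarrow> z \<in> set q1 \<Longrightarrow> z \<in> set q2 \<Longrightarrow> z \<noteq> y \<Longrightarrow> q1 = q2"
  using QS unfolding XY_path_system_def by blast


lemma finite_Q: "finite Q"
proof -
  have "Q \<subseteq> {xs. set xs \<subseteq> V \<and> distinct xs}" using Qb by blast
  moreover have "finite V" using G unfolding digraph_def by simp
  ultimately show ?thesis using finite_subset_distinct finite_subset by blast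
qed

definition mu :: "('a list \<Rightarrow> 'a option) \<Rightarrow> nat" where
  "mu f = (\<Sum>q\<in>Q. case f q of None \<Rightarrow> 0 | Some x \<Rightarrow> Suc (idx q x))"

lemma finv0: "finv P Q y (\<lambda>q. if filter (\<lambda>v. v \<in> VPs P y) q = [] then None
                              else Some (last (filter (\<lambda>v. v \<in> VPs P y) q)))"
  (is "finv P Q y ?f")
  unfolding finv_def
proof (rule conjI; intro ballI allI impI)
  fix q x assume "q \<in> Q" "?f q = Some x"
  then show "x \<in> set q \<and> x \<in> VPs P y"
    using last_filter_in[of "\<lambda>v. v \<in> VPs P y" q] by (simp split: if_splits)
next
  fix q z assume q: "q \<in> Q" and z: "z \<in> after (?f q) q" and zv: "z \<in> VPs P y"
  show "\<exists>q'\<in>Q. \<exists>x'. ?f q' = Some x' \<and> (\<exists>p\<in>P. bef p x' z)"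
  proof (cases "filter (\<lambda>v. v \<in> VPs P y) q = []")
    case True
    then show ?thesis using z zv by (auto simp: filter_empty_conv)
  next
    case False
    then have "z \<in> set q" "idx q (last (filter (\<lambda>v. v \<in> VPs P y) q)) < idx q z" using z by auto
    moreover have "idx q z \<le> idx q (last (filter (\<lambda>v. v \<in> VPs P y) q))"
    proof -
      have "distinct q" using Qb[OF q] by blast
      then show ?thesis using last_filter_idx[of q z "\<lambda>v. v \<in> VPs P y"] zv calculation(1) by simp
    qed
    ultimately show ?thesis by simp
  qed
qed

lemma step:
  assumes fi: "finv P Q y f" and q1: "q1 \<in> Q" and q2: "q2 \<in> Q" and ne: "q1 \<noteq> q2"
    and f1: "f q1 = Some x1" and f2: "f q2 = Some x2" and p: "p \<in> P" "x1 \<in> set p" "x2 \<in> set p"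
    and lt: "idx p x1 < idx p x2"
  shows "\<exists>g. finv P Q y g \<and> mu g < mu f"
proof -
  define L where "L = filter (\<lambda>v. v \<in> VPs P y) (take (idx q2 x2) q2)"
  define h where "h = (if L = [] then None else Some (last L))"
  define g where "g = f(q2 := h)"
  have dq2: "distinct q2" using Qb[OF q2] by blast
  have x2q: "x2 \<in> set q2" "x2 \<in> VPs P y" using fi f2 q2 unfolding finv_def by blast+
  have x1y: "x1 \<in> VPs P y" using fi f1 q1 unfolding finv_def by blast
  have b12: "bef p x1 x2" using p lt unfolding bef_def by simp
  have K: "\<exists>q'\<in>Q. \<exists>x'. g q' = Some x' \<and> (\<exists>p\<in>P. bef p x' z)"
    if "q' \<in> Q" "f q' = Some x'" "p' \<in> P" "bef p' x' z" for q' x' p' z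
  proof (cases "q' = q2")
    case False then show ?thesis using that unfolding g_def by auto
  next
    case True
    then have "x' = x2" using that f2 by simp
    then have "p' = p" using P_uniq[OF that(3) p(1), of x2] that(4) p x2q unfolding bef_def VPs_def by blast
    then have "bef p x1 z" using b12 that(4) \<open>x' = x2\<close> unfolding bef_def by auto
    then show ?thesis using q1 ne f1 p unfolding g_def by auto
  qed
  have hin: "w \<in> set L \<Longrightarrow> w \<in> set q2 \<and> w \<in> VPs P y \<and> idx q2 w < idx q2 x2" for w
    using set_take_idx[OF dq2 x2q(1)] unfolding L_def by auto
  have "finv P Q y g"
    unfolding finv_def
  proof (rule conjI; intro ballI allI impI)
    fix q x assume "q \<in> Q" "g q = Some x"
    then show "x \<in> set q \<and> x \<in> VPs P y"
      using fi hin[of "last L"] unfolding g_def h_def finv_def by (auto split: if_splits)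
  next
    fix q z assume q: "q \<in> Q" and z: "z \<in> after (g q) q" and zv: "z \<in> VPs P y"
    show "\<exists>q'\<in>Q. \<exists>x'. g q' = Some x' \<and> (\<exists>p\<in>P. bef p x' z)"
    proof (cases "q = q2")
      case False
      then have "z \<in> after (f q) q" using z unfolding g_def by simp
      then show ?thesis using fi q zv K unfolding finv_def by blast
    next
      case True
      have zq: "z \<in> set q2" using z True unfolding g_def h_def by (auto split: if_splits)
      consider "idx q2 z < idx q2 x2" | "z = x2" | "idx q2 x2 < idx q2 z"
        using idx_inj[OF zq x2q(1)] by fastforce
      then show ?thesis
      proof cases
        case 1
        then have zL: "z \<in> set L" using set_take_idx[OF dq2 x2q(1)] zq zv unfolding L_def by auto
        then have Lne: "L \<noteq> []" by auto
        then have "idx q2 (last L) < idx q2 z" using z True unfolding g_def h_def by auto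
        moreover have "idx (take (idx q2 x2) q2) z \<le> idx (take (idx q2 x2) q2) (last L)"
          using last_filter_idx[of "take (idx q2 x2) q2" z "\<lambda>v. v \<in> VPs P y"] zL dq2
          unfolding L_def by (auto simp: distinct_take)
        moreover have "last L \<in> set (take (idx q2 x2) q2)" using Lne unfolding L_def
          using last_filter_in by metis
        ultimately show ?thesis using idx_take[of z] idx_take[of "last L"] zL unfolding L_def by auto
      next
        case 2
        then show ?thesis using q1 ne f1 p b12 unfolding g_def by auto
      next
        case 3
        then have "z \<in> after (f q2) q2" using f2 zq by simp
        then show ?thesis using fi q2 zv K unfolding finv_def by blast
      qed
    qed
  qed
  moreover have "mu g < mu f"
  proof -
    let ?c = "\<lambda>f q. case f q of None \<Rightarrow> 0 | Some x \<Rightarrow> Suc (idx q x)"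
    have A: "mu f = ?c f q2 + (\<Sum>q\<in>Q - {q2}. ?c f q)"
      unfolding mu_def using finite_Q q2 by (simp add: sum.remove)
    have B: "mu g = ?c g q2 + (\<Sum>q\<in>Q - {q2}. ?c g q)"
      unfolding mu_def using finite_Q q2 by (simp add: sum.remove)
    have C: "(\<Sum>q\<in>Q - {q2}. ?c g q) = (\<Sum>q\<in>Q - {q2}. ?c f q)"
      by (rule sum.cong) (auto simp: g_def)
    have "?c g q2 < ?c f q2"
      using f2 hin[of "last L"] unfolding g_def h_def by (auto split: if_splits)
    then show ?thesis using A B C by simp
  qed
  ultimately show ?thesis by blast
qed

lemma exists_f: "\<exists>f. finv P Q y f \<and> fcf P Q f"
proof -
  have main: "\<forall>f. finv P Q y f \<and> mu f = n \<longrightarrow> (\<exists>g. finv P Q y g \<and> fcf P Q g)" for n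
  proof (induction n rule: less_induct)
    case (less n)
    show ?case
    proof (intro allI impI)
      fix f assume f: "finv P Q y f \<and> mu f = n"
      show "\<exists>g. finv P Q y g \<and> fcf P Q g"
      proof (cases "fcf P Q f")
        case True then show ?thesis using f by blast
      next
        case False
        then obtain q1 q2 x1 x2 p where h: "q1 \<in> Q" "q2 \<in> Q" "f q1 = Some x1" "f q2 = Some x2"
          "p \<in> P" "x1 \<in> set p" "x2 \<in> set p" "q1 \<noteq> q2" unfolding fcf_def by blast
        have "x1 \<in> set q1 \<and> x1 \<in> VPs P y" "x2 \<in> set q2 \<and> x2 \<in> VPs P y"
          using f h(1-4) unfolding finv_def by blast+
        then have "x1 \<in> set q1" "x2 \<in> set q2" "x1 \<noteq> y" "x2 \<noteq> y" unfolding VPs_def by auto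
        then have "x1 \<noteq> x2" using Q_uniq[OF h(1,2)] h(8) by blast
        then have "idx p x1 < idx p x2 \<or> idx p x2 < idx p x1" using idx_inj[OF h(6,7)] by fastforce
        then obtain g where "finv P Q y g" "mu g < mu f"
        proof
          assume "idx p x1 < idx p x2"
          then show ?thesis using step[OF _ h(1,2,8,3,4,5,6,7)] f that by blast
        next
          assume "idx p x2 < idx p x1"
          then show ?thesis using step[OF _ h(2,1) _ h(4,3,5,7,6)] h(8) f that by metis
        qed
        then show ?thesis using less f by blast
      qed
    qed
  qed
  show ?thesis using main finv0 by blast
qed

context
  fixes f :: "'a list \<Rightarrow> 'a option"
  assumes fi: "finv P Q y f" and fc: "fcf P Q f"
begin

lemma fsome: "q \<in> Q \<Longrightarrow> f q = Some x \<Longrightarrow> x \<in> set q \<and> x \<noteq> y \<and> (\<exists>p\<in>P. x \<in> set p)"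
  using fi unfolding finv_def VPs_def by blast

lemma wit:
  assumes "q \<in> Q" "z \<in> after (f q) q" "p' \<in> P" "z \<in> set p'" "z \<noteq> y"
  shows "\<exists>q'\<in>Q. \<exists>x'. f q' = Some x' \<and> bef p' x' z"
proof -
  have "z \<in> VPs P y" using assms(3-5) unfolding VPs_def by blast
  then obtain q' x' p'' where w: "q' \<in> Q" "f q' = Some x'" "p'' \<in> P" "bef p'' x' z"
    using fi assms(1,2) unfolding finv_def by blast
  then have "p'' = p'" using P_uniq[OF w(3) assms(3) _ assms(4,5)] unfolding bef_def by blast
  then show ?thesis using w by blast
qed

lemma presuf:
  assumes "p1 \<in> P" "q1 \<in> Q" "f q1 = Some x1" "x1 \<in> set p1" "z \<in> set p1" "idx p1 z < idx p1 x1"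
    "q \<in> Q" "z \<in> after (f q) q" "z \<noteq> y"
  shows False
proof -
  obtain q' x' where w: "q' \<in> Q" "f q' = Some x'" "bef p1 x' z"
    using wit[OF assms(7,8,1,5,9)] by blast
  have "q' = q1" using fc w assms(1-4) unfolding fcf_def bef_def by blast
  then have "x' = x1" using w assms(3) by simp
  then show False using w(3) assms(6) unfolding bef_def by simp
qed

lemma sufU:
  assumes "q \<in> Q" "z \<in> after (f q) q" "p2 \<in> P" "z \<in> set p2" "z \<noteq> y"
    "\<not> (\<exists>q\<in>Q. \<exists>x. f q = Some x \<and> x \<in> set p2)"
  shows False
  using wit[OF assms(1-5)] assms(6) unfolding bef_def by blast

definition combo :: "'a list \<Rightarrow> 'a list \<Rightarrow> 'a \<Rightarrow> 'a list" where
  "combo p q x = take (idx p x) p @ drop (idx q x) q"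

lemma combo_set:
  assumes "p \<in> P" "q \<in> Q" "f q = Some x" "x \<in> set p"
  shows "set (combo p q x) = {a \<in> set p. idx p a < idx p x} \<union> {z \<in> set q. idx q x \<le> idx q z}"
proof -
  have "distinct p" "distinct q" using Pb[OF assms(1)] Qb[OF assms(2)] by blast+
  moreover have "x \<in> set q" using fsome[OF assms(2,3)] by blast
  ultimately show ?thesis unfolding combo_def using set_take_idx[of p x] set_drop_idx[of q x] assms(4)
    by (simp only: set_append)
qed

lemma combo_props:
  assumes p: "p \<in> P" and q: "q \<in> Q" and fx: "f q = Some x" and xp: "x \<in> set p"
  shows "XY_path V E X y (combo p q x) \<and> hd (combo p q x) = hd p
         \<and> last (butlast (combo p q x)) = last (butlast q)"
proof -
  define i where "i = idx p x"
  define j where "j = idx q x"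
  define T where "T = take i p"
  define D where "D = drop j q"
  have c: "combo p q x = T @ D" unfolding combo_def T_def D_def i_def j_def by simp
  have PB: "p \<noteq> [] \<and> distinct p \<and> hd p \<in> X \<and> last p = y \<and> (\<forall>v\<in>set (tl p). v \<notin> X) \<and> dpath V E p"
    using Pb[OF p] by blast
  have QB: "q \<noteq> [] \<and> distinct q \<and> hd q \<in> X \<and> last q = y \<and> (\<forall>v\<in>set (tl q). v \<notin> X) \<and> dpath V E q"
    using Qb[OF q] by blast
  have xq: "x \<in> set q" and xy: "x \<noteq> y" using fsome[OF q fx] by blast+
  have yq: "y \<in> set q" using QB last_in_set by metis
  have jlt: "Suc j < length q"
  proof -
    have "j \<le> idx q y" using idx_le_last[of q x] QB xq unfolding j_def by metis
    moreover have "j \<noteq> idx q y" using idx_inj[OF xq yq] xy unfolding j_def by metis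
    moreover have "idx q y = length q - 1" using idx_last[of q] QB by metis
    ultimately show ?thesis using QB by linarith
  qed
  have disj: "set T \<inter> set D = {}"
  proof (rule ccontr)
    assume "set T \<inter> set D \<noteq> {}"
    then obtain z where z: "z \<in> set T" "z \<in> set D" by blast
    then have z1: "z \<in> set p" "idx p z < i" using set_take_idx[of p x] PB xp unfolding T_def i_def by auto
    have z2: "z \<in> set q" "j \<le> idx q z" using z set_drop_idx[of q x] QB xq unfolding D_def j_def by auto
    have "z \<noteq> y"
    proof
      assume "z = y"
      then have "idx p x \<le> idx p z" using idx_le_last[of p x] PB xp by metis
      then show False using z1 unfolding i_def by simp
    qed
    moreover have "z \<noteq> x" using z1 unfolding i_def by auto
    then have "j < idx q z" using z2 idx_inj[OF xq z2(1)] unfolding j_def by fastforce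
    then have "z \<in> after (f q) q" using fx z2 unfolding j_def by simp
    ultimately show False using presuf[OF p q fx xp z1(1) _ q] z1(2) unfolding i_def by blast
  qed
  have dD: "dpath V E D" using dpath_drop[of V E q j] QB jlt unfolding D_def by simp
  have hdD: "hd D = x" using jlt nth_idx[OF xq] unfolding D_def j_def by (simp add: hd_drop_conv_nth)
  have lD: "last D = y" using jlt QB unfolding D_def by (simp add: last_drop)
  have lenD: "2 \<le> length D" using jlt unfolding D_def by simp
  have dc: "dpath V E (combo p q x) \<and> hd (combo p q x) = hd p"
  proof (cases "i = 0")
    case True
    then have "T = []" unfolding T_def by simp
    moreover have "hd p = x" using True nth_idx[OF xp] PB unfolding i_def by (simp add: hd_conv_nth)
    ultimately show ?thesis using c dD hdD by simp
  next
    case False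
    have ilt: "i < length p" using idx_lt[OF xp] unfolding i_def .
    have dT: "dpath V E T" using dpath_take[of V E p i] PB False unfolding T_def by simp
    have lT: "last T = p ! (i - 1)" using False ilt unfolding T_def by (subst last_conv_nth) auto
    have "Suc (i - 1) < length p" using ilt False by simp
    then have "(p ! (i - 1), p ! Suc (i - 1)) \<in> E" using PB unfolding dpath_def by blast
    then have "(last T, hd D) \<in> E" using lT hdD nth_idx[OF xp] False unfolding i_def by simp
    then have "dpath V E (T @ D)" using dpath_append[OF dT dD _ disj] by simp
    moreover have "hd (T @ D) = hd p" using False PB unfolding T_def by (cases p) auto
    ultimately show ?thesis using c by simp
  qed
  have cne: "combo p q x \<noteq> []" and cdist: "distinct (combo p q x)"
    using dc unfolding dpath_def by auto
  have tlX: "\<forall>v\<in>set (tl (combo p q x)). v \<notin> X"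
  proof
    fix v assume "v \<in> set (tl (combo p q x))"
    then have v: "v \<in> set (combo p q x)" "v \<noteq> hd p" using set_tl_distinct[OF cdist cne] dc by auto
    have tlp: "a \<in> set p \<Longrightarrow> a \<noteq> hd p \<Longrightarrow> a \<notin> X" for a using PB by (cases p) auto
    have tlq: "a \<in> set q \<Longrightarrow> a \<noteq> hd q \<Longrightarrow> a \<notin> X" for a using QB by (cases q) auto
    from v(1) consider "v \<in> set p" | "v \<in> set q" "idx q x \<le> idx q v"
      using combo_set[OF p q fx xp] by blast
    then show "v \<notin> X"
    proof cases
      case 1 then show ?thesis using tlp v(2) by blast
    next
      case 2
      show ?thesis
      proof (cases "v = hd q")
        case True
        then have "idx q v = 0" using idx_hd QB by metis
        then have "x = v" using 2 idx_inj[OF xq 2(1)] by simp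
        then show ?thesis using tlp xp v(2) by blast
      next
        case False then show ?thesis using tlq 2 by blast
      qed
    qed
  qed
  have Dne: "D \<noteq> []" using lenD by (cases D) auto
  have "last (combo p q x) = y" using c lD Dne by simp
  then have xy_c: "XY_path V E X y (combo p q x)"
    unfolding XY_path_def using dc tlX PB by auto
  have "length (butlast D) \<ge> 1" using lenD by simp
  then have bD: "butlast D \<noteq> []" by (metis list.size(3) not_one_le_zero)
  have "last (butlast (T @ D)) = last (butlast D)" using Dne bD
    by (simp add: butlast_append)
  also have "\<dots> = last (butlast q)" unfolding D_def using jlt
    by (simp add: butlast_drop last_drop)
  finally show ?thesis using xy_c dc c by simp
qed

lemma combo_cases:
  assumes "p \<in> P" "q \<in> Q" "f q = Some x" "x \<in> set p" "z \<in> set (combo p q x)"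
  obtains "z \<in> set p" "idx p z < idx p x" | "z = x" | "z \<in> after (f q) q"
proof -
  have xq: "x \<in> set q" using fsome[OF assms(2,3)] by blast
  from assms(5) consider "z \<in> set p" "idx p z < idx p x" | "z \<in> set q" "idx q x \<le> idx q z"
    using combo_set[OF assms(1-4)] by blast
  then show ?thesis
  proof cases
    case 1 then show ?thesis using that by blast
  next
    case 2
    show ?thesis
    proof (cases "z = x")
      case True then show ?thesis using that by blast
    next
      case False
      then have "idx q x < idx q z" using 2 idx_inj[OF xq 2(1)] by fastforce
      then show ?thesis using that 2 assms(3) by simp
    qed
  qed
qed

lemma dCN:
  assumes "p1 \<in> P" "q1 \<in> Q" "f q1 = Some x1" "x1 \<in> set p1" "q2 \<in> Q" "f q2 = None"
    "z \<in> set (combo p1 q1 x1)" "z \<in> set q2" "z \<noteq> y"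
  shows False
proof -
  have zq2: "z \<in> after (f q2) q2" using assms(6,8) by simp
  have x1q: "x1 \<in> set q1" using fsome[OF assms(2,3)] by blast
  show False
  proof (rule combo_cases[OF assms(1-4,7)])
    assume "z \<in> set p1" "idx p1 z < idx p1 x1"
    then show False using presuf[OF assms(1-4) _ _ assms(5) zq2 assms(9)] by blast
  next
    assume "z = x1"
    then have "q1 = q2" using Q_uniq[OF assms(2,5) x1q] assms(8,9) by blast
    then show False using assms(3,6) by simp
  next
    assume "z \<in> after (f q1) q1"
    then have "q1 = q2" using Q_uniq[OF assms(2,5) _ assms(8,9)] assms(3) by auto
    then show False using assms(3,6) by simp
  qed
qed

lemma dCU:
  assumes "p1 \<in> P" "q1 \<in> Q" "f q1 = Some x1" "x1 \<in> set p1" "p2 \<in> P"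
    "\<not> (\<exists>q\<in>Q. \<exists>x. f q = Some x \<and> x \<in> set p2)"
    "z \<in> set (combo p1 q1 x1)" "z \<in> set p2" "z \<noteq> y"
  shows False
proof (rule combo_cases[OF assms(1-4,7)])
  assume "z \<in> set p1" "idx p1 z < idx p1 x1"
  then have "p1 = p2" using P_uniq[OF assms(1,5) _ assms(8,9)] by blast
  then show False using assms(2,3,4,6) by blast
next
  assume "z = x1"
  then show False using assms(2,3,6,8) by blast
next
  assume "z \<in> after (f q1) q1"
  then show False using sufU[OF assms(2) _ assms(5,8,9,6)] by blast
qed

lemma dCC:
  assumes "p1 \<in> P" "q1 \<in> Q" "f q1 = Some x1" "x1 \<in> set p1"
    "p2 \<in> P" "q2 \<in> Q" "f q2 = Some x2" "x2 \<in> set p2"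
    "combo p1 q1 x1 \<noteq> combo p2 q2 x2"
    "z \<in> set (combo p1 q1 x1)" "z \<in> set (combo p2 q2 x2)" "z \<noteq> y"
  shows False
proof -
  have x1: "x1 \<in> set q1" "x1 \<noteq> y" using fsome[OF assms(2,3)] by blast+
  have x2: "x2 \<in> set q2" "x2 \<noteq> y" using fsome[OF assms(6,7)] by blast+
  have qne: "q1 \<noteq> q2"
  proof
    assume "q1 = q2"
    then have "x1 = x2" using assms(3,7) by simp
    then have "p1 = p2" using P_uniq[OF assms(1,5) assms(4)] assms(8) x1(2) by blast
    then show False using assms(9) \<open>q1 = q2\<close> \<open>x1 = x2\<close> by simp
  qed
  have pne: "p1 \<noteq> p2"
  proof
    assume "p1 = p2"
    then have "q1 = q2" using fc assms(1-8) unfolding fcf_def by blast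
    then show False using qne by simp
  qed
  have zq1: "z \<in> after (f q1) q1 \<Longrightarrow> z \<in> set q1" using assms(3) by auto
  have zq2: "z \<in> after (f q2) q2 \<Longrightarrow> z \<in> set q2" using assms(7) by auto
  show False
  proof (rule combo_cases[OF assms(1-4,10)])
    assume a1: "z \<in> set p1" "idx p1 z < idx p1 x1"
    show False
    proof (rule combo_cases[OF assms(5-8,11)])
      assume "z \<in> set p2" "idx p2 z < idx p2 x2"
      then show False using P_uniq[OF assms(1,5) a1(1) _ assms(12)] pne by blast
    next
      assume "z = x2"
      then show False using P_uniq[OF assms(1,5) a1(1) _ assms(12)] pne assms(8) by blast
    next
      assume "z \<in> after (f q2) q2"
      then show False using presuf[OF assms(1-4) a1 assms(6) _ assms(12)] by blast
    qed
  next
    assume a1: "z = x1"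
    show False
    proof (rule combo_cases[OF assms(5-8,11)])
      assume "z \<in> set p2" "idx p2 z < idx p2 x2"
      then show False using P_uniq[OF assms(1,5) _ _ assms(12)] pne assms(4) a1 by blast
    next
      assume "z = x2"
      then show False using Q_uniq[OF assms(2,6) _ _ assms(12)] qne x1 x2 a1 by blast
    next
      assume "z \<in> after (f q2) q2"
      then show False using Q_uniq[OF assms(2,6) _ _ assms(12)] qne x1 a1 zq2 by blast
    qed
  next
    assume a1: "z \<in> after (f q1) q1"
    show False
    proof (rule combo_cases[OF assms(5-8,11)])
      assume a2: "z \<in> set p2" "idx p2 z < idx p2 x2"
      then show False using presuf[OF assms(5-8) a2 assms(2) a1 assms(12)] by blast
    next
      assume "z = x2"
      then show False using Q_uniq[OF assms(2,6) _ _ assms(12)] qne x2 a1 zq1 by blast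
    next
      assume "z \<in> after (f q2) q2"
      then show False using Q_uniq[OF assms(2,6) _ _ assms(12)] qne a1 zq1 zq2 by blast
    qed
  qed
qed

lemma build:
  "\<exists>R. XY_path_system V E X y R \<and> init_vertices P \<subseteq> init_vertices R \<and>
       terminal_edges Q \<subseteq> terminal_edges R"
proof -
  define Cs where "Cs = {combo p q x | p q x. p \<in> P \<and> q \<in> Q \<and> f q = Some x \<and> x \<in> set p}"
  define Ns where "Ns = {q \<in> Q. f q = None}"
  define Us where "Us = {p \<in> P. \<not> (\<exists>q\<in>Q. \<exists>x. f q = Some x \<and> x \<in> set p)}"
  define R where "R = Cs \<union> Ns \<union> Us"
  have paths: "\<forall>r\<in>R. XY_path V E X y r"
    unfolding R_def Cs_def Ns_def Us_def using combo_props Pb Qb by blast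
  have disj: "set r1 \<inter> set r2 \<subseteq> {y}" if r: "r1 \<in> R" "r2 \<in> R" "r1 \<noteq> r2" for r1 r2
  proof
    fix z assume z: "z \<in> set r1 \<inter> set r2"
    show "z \<in> {y}"
    proof (rule ccontr)
      assume zy: "z \<notin> {y}"
      then have zy': "z \<noteq> y" by simp
      have z1: "z \<in> set r1" and z2: "z \<in> set r2" using z by auto
      have PP: "p1 \<in> P \<Longrightarrow> p2 \<in> P \<Longrightarrow> p1 \<noteq> p2 \<Longrightarrow> z \<in> set p1 \<Longrightarrow> z \<in> set p2 \<Longrightarrow> False" for p1 p2
        using P_uniq zy' by blast
      have QQ: "q1 \<in> Q \<Longrightarrow> q2 \<in> Q \<Longrightarrow> q1 \<noteq> q2 \<Longrightarrow> z \<in> set q1 \<Longrightarrow> z \<in> set q2 \<Longrightarrow> False" for q1 q2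
        using Q_uniq zy' by blast
      have NU: "q1 \<in> Q \<Longrightarrow> f q1 = None \<Longrightarrow> p2 \<in> Us \<Longrightarrow> z \<in> set q1 \<Longrightarrow> z \<in> set p2 \<Longrightarrow> False" for q1 p2
        using sufU[of q1 z p2] zy' unfolding Us_def by auto
      from r(1) consider (C1) p1 q1 x1 where "r1 = combo p1 q1 x1" "p1 \<in> P" "q1 \<in> Q" "f q1 = Some x1" "x1 \<in> set p1"
        | (N1) "r1 \<in> Ns" | (U1) "r1 \<in> Us" unfolding R_def Cs_def by blast
      then show False
      proof cases
        case C1
        from r(2) consider (C2) p2 q2 x2 where "r2 = combo p2 q2 x2" "p2 \<in> P" "q2 \<in> Q" "f q2 = Some x2" "x2 \<in> set p2"
          | (N2) "r2 \<in> Ns" | (U2) "r2 \<in> Us" unfolding R_def Cs_def by blast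
        then show False
        proof cases
          case C2 then show False using dCC[OF C1(2-5) C2(2-5) _ _ _ zy'] C1(1) r(3) z1 z2 by blast
        next
          case N2 then show False using dCN[OF C1(2-5) _ _ _ _ zy'] C1(1) z1 z2 unfolding Ns_def by blast
        next
          case U2 then show False using dCU[OF C1(2-5) _ _ _ _ zy'] C1(1) z1 z2 unfolding Us_def by blast
        qed
      next
        case N1
        from r(2) consider (C2) p2 q2 x2 where "r2 = combo p2 q2 x2" "p2 \<in> P" "q2 \<in> Q" "f q2 = Some x2" "x2 \<in> set p2"
          | (N2) "r2 \<in> Ns" | (U2) "r2 \<in> Us" unfolding R_def Cs_def by blast
        then show False
        proof cases
          case C2 then show False using dCN[OF C2(2-5) _ _ _ _ zy'] C2(1) N1 z1 z2 unfolding Ns_def by blast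
        next
          case N2 then show False using QQ N1 r(3) z1 z2 unfolding Ns_def by blast
        next
          case U2 then show False using NU N1 z1 z2 unfolding Ns_def by blast
        qed
      next
        case U1
        from r(2) consider (C2) p2 q2 x2 where "r2 = combo p2 q2 x2" "p2 \<in> P" "q2 \<in> Q" "f q2 = Some x2" "x2 \<in> set p2"
          | (N2) "r2 \<in> Ns" | (U2) "r2 \<in> Us" unfolding R_def Cs_def by blast
        then show False
        proof cases
          case C2 then show False using dCU[OF C2(2-5) _ _ _ _ zy'] C2(1) U1 z1 z2 unfolding Us_def by blast
        next
          case N2 then show False using NU U1 z1 z2 unfolding Ns_def by blast
        next
          case U2 then show False using PP U1 r(3) z1 z2 unfolding Us_def by blast
        qed
      qed
    qed
  qed
  have sys: "XY_path_system V E X y R"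
    unfolding XY_path_system_def using paths disj by blast
  have init: "init_vertices P \<subseteq> init_vertices R"
    unfolding init_vertices_def
  proof
    fix a assume "a \<in> hd ` P"
    then obtain p where p: "p \<in> P" "a = hd p" by blast
    show "a \<in> hd ` R"
    proof (cases "p \<in> Us")
      case True then show ?thesis using p unfolding R_def by blast
    next
      case False
      then obtain q x where qx: "q \<in> Q" "f q = Some x" "x \<in> set p" using p unfolding Us_def by blast
      then have "combo p q x \<in> R" using p unfolding R_def Cs_def by blast
      moreover have "hd (combo p q x) = hd p" using combo_props[OF p(1) qx] by blast
      ultimately show ?thesis using p by (metis rev_image_eqI)
    qed
  qed
  have tm: "terminal_edges Q \<subseteq> terminal_edges R"
    unfolding terminal_edges_def
  proof
    fix e assume "e \<in> (\<lambda>p. (last (butlast p), last p)) ` Q"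
    then obtain q where q: "q \<in> Q" "e = (last (butlast q), last q)" by blast
    show "e \<in> (\<lambda>p. (last (butlast p), last p)) ` R"
    proof (cases "f q")
      case None then show ?thesis using q unfolding R_def Ns_def by blast
    next
      case (Some x)
      then obtain p where p: "p \<in> P" "x \<in> set p" using fsome[OF q(1)] by blast
      then have "combo p q x \<in> R" using q Some unfolding R_def Cs_def by blast
      moreover have "last (butlast (combo p q x)) = last (butlast q)"
        and "last (combo p q x) = last q"
        using combo_props[OF p(1) q(1) Some p(2)] Qb[OF q(1)] unfolding XY_path_def by auto
      ultimately show ?thesis using q by (metis (no_types, lifting) rev_image_eqI)
    qed
  qed
  show ?thesis using sys init tm by blast
qed

end

end


theorem corollary2p3:
  fixes V :: "'a set" and E :: "('a \<times> 'a) set" and X :: "'a set" and y :: 'a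
    and \<P> \<Q> :: "'a list set"
  assumes "digraph V E"
    and "X \<subseteq> V" and "y \<in> V" and "y \<notin> X"
    and "XY_path_system V E X y \<P>"
    and "XY_path_system V E X y \<Q>"
  shows "\<exists>\<R>. XY_path_system V E X y \<R> \<and>
           init_vertices \<P> \<subseteq> init_vertices \<R> \<and>
           terminal_edges \<Q> \<subseteq> terminal_edges \<R>"
proof -
  obtain f where "finv \<P> \<Q> y f" "fcf \<P> \<Q> f"
    using exists_f[OF assms] by blast
  then show ?thesis using build[OF assms] by blast
qed

end
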